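(* Let $\mathcal L$ be a Zariski dense set of lines through $0$ in $\mathbb{R}^n$, and let $\Phi:(\mathbb{R}^n,0)\to(\mathbb{R}^n,0)$ be a germ of smooth diffeomorphism with $d_0\Phi=\mathrm{id}$ such that for every $L\in\mathcal L$ the image under $\Phi$ of some neighborhood of $0$ in $L$ is contained in a circle. Then the quadratic part $\Phi_2$, extended to $\mathbb{C}^n$, satisfies $$(\Phi_2(x),\Phi_2(x))=0\quad\text{and}\quad(\Phi_2(x),x)=0\qquad\text{for all }x\in C.$$
   Context: A *circle* in $\mathbb{R}^n$ means either a round Euclidean circle or a straight line; $\mathbb{R}^n$ carries the standard Euclidean inner product $(\cdot,\cdot)$. A set $\mathcal D$ of lines through $0$ in $\mathbb{R}^n$ is *Zariski dense* if every homogeneous real polynomial on $\mathbb{R}^n$ vanishing on all lines of $\mathcal D$ is identically zero. For a smooth germ $\Phi$ with $\Phi(0)=0$, $d_0\Phi=\mathrm{id}$, write its Taylor expansion $\Phi(x)=x+\Phi_2(x)+\Phi_3(x)+\cdots$ with $\Phi_k$ homogeneous polynomial maps of degree $k$. The inner product is extended to $\mathbb{C}^n$ complex-bilinearly, polynomial maps are extended to $\mathbb{C}^n$ by the same formulas, and the *asymptotic cone* is $C=\{x\in\mathbb{C}^n:(x,x)=0\}$. *)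

theory Defs
  imports "HOL-Analysis.Analysis"
begin

fun Ck_on :: "nat \<Rightarrow> ('a::real_normed_vector \<Rightarrow> 'b::real_normed_vector) \<Rightarrow> 'a set \<Rightarrow> bool" where
  "Ck_on 0 f U = continuous_on U f"
| "Ck_on (Suc k) f U = (continuous_on U f \<and> (\<forall>x\<in>U. f differentiable (at x)) \<and>
      (\<forall>v. Ck_on k (\<lambda>x. frechet_derivative f (at x) v) U))"

definition smooth_on :: "('a::real_normed_vector \<Rightarrow> 'b::real_normed_vector) \<Rightarrow> 'a set \<Rightarrow> bool" where
  "smooth_on f U \<longleftrightarrow> (\<forall>k. Ck_on k f U)"

(* germ at 0 of a smooth diffeomorphism (R^n,0) -> (R^n,0) with d_0 Phi = id,
   represented by a representative on an open neighbourhood U of 0 *)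
definition smooth_diffeo_germ_id :: "(real^'n \<Rightarrow> real^'n) \<Rightarrow> (real^'n) set \<Rightarrow> bool" where
  "smooth_diffeo_germ_id \<Phi> U \<longleftrightarrow> open U \<and> 0 \<in> U \<and> smooth_on \<Phi> U \<and> inj_on \<Phi> U \<and>
     open (\<Phi> ` U) \<and> smooth_on (inv_into U \<Phi>) (\<Phi> ` U) \<and> \<Phi> 0 = 0 \<and> (\<Phi> has_derivative id) (at 0)"

definition is_circle :: "(real^'n) set \<Rightarrow> bool" where
  "is_circle S \<longleftrightarrow>
     (\<exists>p v. v \<noteq> 0 \<and> S = {p + t *\<^sub>R v | t. True}) \<or>
     (\<exists>c r u w. r > 0 \<and> norm u = 1 \<and> norm w = 1 \<and> u \<bullet> w = 0 \<and>
        S = {c + (r * cos \<theta>) *\<^sub>R u + (r * sin \<theta>) *\<^sub>R w | \<theta>. True})"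

definition line_through_0 :: "(real^'n) set \<Rightarrow> bool" where
  "line_through_0 L \<longleftrightarrow> (\<exists>v. v \<noteq> 0 \<and> L = {t *\<^sub>R v | t. True})"

(* homogeneous real polynomial of degree d on R^n, given by a finite set A of
   exponent vectors of total degree d and coefficients a *)
definition hpoly_eval :: "(('n \<Rightarrow> nat) \<Rightarrow> real) \<Rightarrow> ('n \<Rightarrow> nat) set \<Rightarrow> real^'n \<Rightarrow> real" where
  "hpoly_eval a A x = (\<Sum>\<alpha>\<in>A. a \<alpha> * (\<Prod>i\<in>UNIV. (x $ i) ^ \<alpha> i))"

definition zariski_dense_lines :: "(real^'n::finite) set set \<Rightarrow> bool" where
  "zariski_dense_lines \<L> \<longleftrightarrow> (\<forall>L\<in>\<L>. line_through_0 L) \<and>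
     (\<forall>(d::nat) A a. finite A \<and> (\<forall>\<alpha>\<in>A. (\<Sum>i\<in>UNIV. \<alpha> i) = d) \<and>
        (\<forall>L\<in>\<L>. \<forall>x\<in>L. hpoly_eval a A x = 0) \<longrightarrow> (\<forall>x. hpoly_eval a A x = 0))"

(* Taylor coefficients of the quadratic part: Phi_2(x)_k = sum_{i,j} c k i j x_i x_j,
   c k i j = (1/2) d^2 Phi_k/dx_i dx_j (0) *)
definition quad_coeff :: "(real^'n \<Rightarrow> real^'n) \<Rightarrow> 'n \<Rightarrow> 'n \<Rightarrow> 'n \<Rightarrow> real" where
  "quad_coeff \<Phi> k i j =
     (frechet_derivative (\<lambda>y. frechet_derivative \<Phi> (at y) (axis i 1)) (at 0) (axis j 1)) $ k / 2"

definition quad_part_C :: "(real^'n \<Rightarrow> real^'n) \<Rightarrow> complex^'n \<Rightarrow> complex^'n" where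
  "quad_part_C \<Phi> z = (\<chi> k. \<Sum>i\<in>UNIV. \<Sum>j\<in>UNIV. complex_of_real (quad_coeff \<Phi> k i j) * z $ i * z $ j)"

(* complex-bilinear extension of the Euclidean inner product *)
definition cbil :: "complex^'n \<Rightarrow> complex^'n \<Rightarrow> complex" where
  "cbil x y = (\<Sum>i\<in>UNIV. x $ i * y $ i)"

end

theory Submission
  imports Defs "HOL-Computational_Algebra.Polynomial"
begin

definition dd :: "real^'n \<Rightarrow> (real^'n \<Rightarrow> real^'n) \<Rightarrow> real^'n \<Rightarrow> real^'n" where
  "dd u F = (\<lambda>x. frechet_derivative F (at x) u)"

lemma smooth_dd: "smooth_on F U \<Longrightarrow> smooth_on (dd u F) U"
  unfolding smooth_on_def dd_def
proof
  fix k assume "\<forall>k. Ck_on k F U"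
  then have "Ck_on (Suc k) F U" by blast
  then show "Ck_on k (\<lambda>x. frechet_derivative F (at x) u) U" by simp
qed

lemma smooth_diff: "smooth_on F U \<Longrightarrow> x \<in> U \<Longrightarrow> F differentiable (at x)"
proof -
  assume "smooth_on F U" "x \<in> U"
  then have "Ck_on (Suc 0) F U" unfolding smooth_on_def by blast
  then show ?thesis using \<open>x \<in> U\<close> by simp
qed

lemma fd_has: "F differentiable (at x) \<Longrightarrow> (F has_derivative (\<lambda>h. dd h F x)) (at x)"
  unfolding dd_def using frechet_derivative_works[of F "at x"] by simp

lemma lin_expand:
  fixes L :: "real^'n \<Rightarrow> 'b::real_vector"
  assumes "linear L"
  shows "L u = (\<Sum>i\<in>UNIV. u$i *\<^sub>R L (axis i 1))"
proof -
  have "u = (\<Sum>i\<in>UNIV. u$i *\<^sub>R axis i 1)"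
    using basis_expansion[of u] by (simp add: scalar_mult_eq_scaleR)
  then have "L u = L (\<Sum>i\<in>UNIV. u$i *\<^sub>R axis i 1)" by simp
  also have "\<dots> = (\<Sum>i\<in>UNIV. u$i *\<^sub>R L (axis i 1))"
    using assms by (simp add: linear_sum linear_scale)
  finally show ?thesis .
qed

lemma dd_lin: "F differentiable (at x) \<Longrightarrow> dd u F x = (\<Sum>i\<in>UNIV. u$i *\<^sub>R dd (axis i 1) F x)"
proof -
  assume "F differentiable (at x)"
  then have "linear (\<lambda>h. dd h F x)" using fd_has has_derivative_linear by blast
  from lin_expand[OF this] show ?thesis .
qed

lemma dd_sum:
  fixes H :: "'i \<Rightarrow> real^'n \<Rightarrow> real^'n"
  assumes "finite I" "open U" "x \<in> U" "\<And>y. y \<in> U \<Longrightarrow> G y = (\<Sum>i\<in>I. c i *\<^sub>R H i y)"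
    "\<And>i y. i \<in> I \<Longrightarrow> y \<in> U \<Longrightarrow> H i differentiable (at y)"
  shows "dd w G x = (\<Sum>i\<in>I. c i *\<^sub>R dd w (H i) x)" and "G differentiable (at x)"
proof -
  have hd: "\<And>i. i \<in> I \<Longrightarrow> ((\<lambda>y. c i *\<^sub>R H i y) has_derivative (\<lambda>h. c i *\<^sub>R dd h (H i) x)) (at x)"
    by (rule has_derivative_scaleR_right, rule fd_has, rule assms(5), assumption, rule assms(3))
  have "((\<lambda>y. \<Sum>i\<in>I. c i *\<^sub>R H i y) has_derivative (\<lambda>h. \<Sum>i\<in>I. c i *\<^sub>R dd h (H i) x)) (at x)"
    by (rule has_derivative_sum, rule hd)
  then have d: "(G has_derivative (\<lambda>h. \<Sum>i\<in>I. c i *\<^sub>R dd h (H i) x)) (at x)"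
    by (rule has_derivative_transform_within_open[OF _ assms(2,3)]) (simp add: assms(4))
  have "(\<lambda>h. \<Sum>i\<in>I. c i *\<^sub>R dd h (H i) x) = frechet_derivative G (at x)"
    by (rule frechet_derivative_at[OF d])
  then show "dd w G x = (\<Sum>i\<in>I. c i *\<^sub>R dd w (H i) x)"
    unfolding dd_def by (metis (no_types, lifting))
  show "G differentiable (at x)" using d differentiable_def by blast
qed

lemma zero_deriv:
  fixes h :: "real \<Rightarrow> 'b::real_normed_vector"
  assumes "open I" "\<forall>t\<in>I. h t = 0" "\<forall>t\<in>I. (h has_vector_derivative h' t) (at t)"
  shows "\<forall>t\<in>I. h' t = 0"
proof
  fix t assume t: "t \<in> I"
  have "((\<lambda>_. 0) has_vector_derivative 0) (at t)" by simp
  then have "(h has_vector_derivative 0) (at t)"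
    by (rule has_vector_derivative_transform_within_open[OF _ assms(1) t]) (use assms(2) in simp)
  then show "h' t = 0" using assms(3) t vector_derivative_unique_at by blast
qed

lemma inner_vd:
  fixes f h :: "real \<Rightarrow> 'b::real_inner"
  assumes "(f has_vector_derivative f') (at t)" "(h has_vector_derivative h') (at t)"
  shows "((\<lambda>t. f t \<bullet> h t) has_vector_derivative (f t \<bullet> h' + f' \<bullet> h t)) (at t)"
  using bounded_bilinear.has_vector_derivative[OF bounded_bilinear_inner assms] by simp

lemma smooth_iter: "smooth_on F U \<Longrightarrow> smooth_on ((dd v ^^ m) F) U"
  by (induction m) (auto intro: smooth_dd)

lemma chain_line:
  assumes "G differentiable (at (t *\<^sub>R v))"
  shows "((\<lambda>t. G (t *\<^sub>R v)) has_vector_derivative dd v G (t *\<^sub>R v)) (at t)"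
proof -
  have l: "linear (\<lambda>h. dd h G (t *\<^sub>R v))" using fd_has[OF assms] has_derivative_linear by blast
  have "((\<lambda>t. t *\<^sub>R v) has_derivative (\<lambda>h. h *\<^sub>R v)) (at t)"
    by (intro derivative_eq_intros) auto
  from has_derivative_compose[OF this fd_has[OF assms]]
  have "((\<lambda>t. G (t *\<^sub>R v)) has_derivative (\<lambda>h. dd (h *\<^sub>R v) G (t *\<^sub>R v))) (at t)" by (simp add: o_def)
  moreover have "(\<lambda>h. dd (h *\<^sub>R v) G (t *\<^sub>R v)) = (\<lambda>h. h *\<^sub>R dd v G (t *\<^sub>R v))"
  proof
    fix h show "dd (h *\<^sub>R v) G (t *\<^sub>R v) = h *\<^sub>R dd v G (t *\<^sub>R v)"
      using linear_scale[OF l, of h v] by simp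
  qed
  ultimately show ?thesis unfolding has_vector_derivative_def by simp
qed

lemma curve_deriv:
  assumes "smooth_on \<Phi> U" "t *\<^sub>R v \<in> U"
  shows "((\<lambda>t. (dd v ^^ m) \<Phi> (t *\<^sub>R v)) has_vector_derivative (dd v ^^ Suc m) \<Phi> (t *\<^sub>R v)) (at t)"
  using chain_line[OF smooth_diff[OF smooth_iter[OF assms(1)] assms(2)]] by simp

lemma lin_iter:
  fixes g :: "nat \<Rightarrow> real \<Rightarrow> 'b::real_normed_vector"
  assumes "open I" "\<forall>m. \<forall>t\<in>I. (g m has_vector_derivative g (Suc m) t) (at t)"
    "bounded_linear L" "\<forall>t\<in>I. L (g 0 t) = 0"
  shows "\<forall>t\<in>I. L (g m t) = 0"
proof (induction m)
  case 0 then show ?case using assms(4) by simp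
next
  case (Suc m)
  have "\<forall>t\<in>I. ((\<lambda>t. L (g m t)) has_vector_derivative L (g (Suc m) t)) (at t)"
    using assms(2) bounded_linear.has_vector_derivative[OF assms(3)] by blast
  from zero_deriv[OF assms(1) Suc this] show ?case .
qed

definition d2 :: "(real^'n \<Rightarrow> real^'n) \<Rightarrow> 'n \<Rightarrow> 'n \<Rightarrow> real^'n \<Rightarrow> real^'n" where
  "d2 \<Phi> i j = dd (axis j 1) (dd (axis i 1) \<Phi>)"
definition d3 :: "(real^'n \<Rightarrow> real^'n) \<Rightarrow> 'n \<Rightarrow> 'n \<Rightarrow> 'n \<Rightarrow> real^'n \<Rightarrow> real^'n" where
  "d3 \<Phi> i j k = dd (axis k 1) (d2 \<Phi> i j)"
definition d4 :: "(real^'n \<Rightarrow> real^'n) \<Rightarrow> 'n \<Rightarrow> 'n \<Rightarrow> 'n \<Rightarrow> 'n \<Rightarrow> real^'n \<Rightarrow> real^'n" where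
  "d4 \<Phi> i j k l = dd (axis l 1) (d3 \<Phi> i j k)"

lemma expansions:
  assumes sm: "smooth_on \<Phi> U" and U: "open U"
  shows "\<forall>y\<in>U. (dd v ^^ 2) \<Phi> y = (\<Sum>i\<in>UNIV. v$i *\<^sub>R (\<Sum>j\<in>UNIV. v$j *\<^sub>R d2 \<Phi> i j y))"
    and "\<forall>y\<in>U. (dd v ^^ 3) \<Phi> y = (\<Sum>i\<in>UNIV. v$i *\<^sub>R (\<Sum>j\<in>UNIV. v$j *\<^sub>R (\<Sum>k\<in>UNIV. v$k *\<^sub>R d3 \<Phi> i j k y)))"
    and "\<forall>y\<in>U. (dd v ^^ 4) \<Phi> y = (\<Sum>i\<in>UNIV. v$i *\<^sub>R (\<Sum>j\<in>UNIV. v$j *\<^sub>R (\<Sum>k\<in>UNIV. v$k *\<^sub>R (\<Sum>l\<in>UNIV. v$l *\<^sub>R d4 \<Phi> i j k l y))))"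
proof -
  define d1 where "d1 i = dd (axis i 1) \<Phi>" for i
  have sd1: "smooth_on (d1 i) U" for i unfolding d1_def by (rule smooth_dd[OF sm])
  have sd2: "smooth_on (d2 \<Phi> i j) U" for i j unfolding d2_def by (intro smooth_dd sm)
  have sd3: "smooth_on (d3 \<Phi> i j k) U" for i j k unfolding d3_def by (intro smooth_dd sd2)
  have sd4: "smooth_on (d4 \<Phi> i j k l) U" for i j k l unfolding d4_def by (intro smooth_dd sd3)
  have E1: "dd v \<Phi> y = (\<Sum>i\<in>UNIV. v$i *\<^sub>R d1 i y)" if "y \<in> U" for y
    unfolding d1_def by (rule dd_lin[OF smooth_diff[OF sm that]])
  have E2: "dd v (dd v \<Phi>) y = (\<Sum>i\<in>UNIV. v$i *\<^sub>R (\<Sum>j\<in>UNIV. v$j *\<^sub>R d2 \<Phi> i j y))" if "y \<in> U" for y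
  proof -
    have a: "dd v (dd v \<Phi>) y = (\<Sum>i\<in>UNIV. v$i *\<^sub>R dd v (d1 i) y)"
      by (rule dd_sum(1)[of UNIV U y "dd v \<Phi>" "\<lambda>i. v$i" d1, OF _ U that E1]) (auto intro: smooth_diff[OF sd1])
    have "dd v (d1 i) y = (\<Sum>j\<in>UNIV. v$j *\<^sub>R d2 \<Phi> i j y)" for i
      unfolding d2_def d1_def[symmetric] by (rule dd_lin[OF smooth_diff[OF sd1 that]])
    then show ?thesis using a by simp
  qed
  define H2 where "H2 i = (\<lambda>y. \<Sum>j\<in>UNIV. v$j *\<^sub>R d2 \<Phi> i j y)" for i
  have H2d: "H2 i differentiable (at y)" "dd v (H2 i) y = (\<Sum>j\<in>UNIV. v$j *\<^sub>R (\<Sum>k\<in>UNIV. v$k *\<^sub>R d3 \<Phi> i j k y))"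
    if "y \<in> U" for i y
  proof -
    show "H2 i differentiable (at y)"
      by (rule dd_sum(2)[of UNIV U y "H2 i" "\<lambda>j. v$j" "d2 \<Phi> i", OF _ U that]) (auto simp: H2_def intro: smooth_diff[OF sd2])
    have "dd v (H2 i) y = (\<Sum>j\<in>UNIV. v$j *\<^sub>R dd v (d2 \<Phi> i j) y)"
      by (rule dd_sum(1)[of UNIV U y "H2 i" "\<lambda>j. v$j" "d2 \<Phi> i", OF _ U that]) (auto simp: H2_def intro: smooth_diff[OF sd2])
    also have "\<dots> = (\<Sum>j\<in>UNIV. v$j *\<^sub>R (\<Sum>k\<in>UNIV. v$k *\<^sub>R d3 \<Phi> i j k y))"
    proof -
      have "dd v (d2 \<Phi> i j) y = (\<Sum>k\<in>UNIV. v$k *\<^sub>R d3 \<Phi> i j k y)" for j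
        unfolding d3_def by (rule dd_lin[OF smooth_diff[OF sd2 that]])
      then show ?thesis by simp
    qed
    finally show "dd v (H2 i) y = (\<Sum>j\<in>UNIV. v$j *\<^sub>R (\<Sum>k\<in>UNIV. v$k *\<^sub>R d3 \<Phi> i j k y))" .
  qed
  have E3: "dd v (dd v (dd v \<Phi>)) y = (\<Sum>i\<in>UNIV. v$i *\<^sub>R (\<Sum>j\<in>UNIV. v$j *\<^sub>R (\<Sum>k\<in>UNIV. v$k *\<^sub>R d3 \<Phi> i j k y)))"
    if "y \<in> U" for y
  proof -
    have "dd v (dd v (dd v \<Phi>)) y = (\<Sum>i\<in>UNIV. v$i *\<^sub>R dd v (H2 i) y)"
      by (rule dd_sum(1)[of UNIV U y "dd v (dd v \<Phi>)" "\<lambda>i. v$i" H2, OF _ U that]) (auto simp: E2 H2_def intro: H2d(1)[unfolded H2_def])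
    then show ?thesis using H2d(2)[OF that] by simp
  qed
  define H3 where "H3 i j = (\<lambda>y. \<Sum>k\<in>UNIV. v$k *\<^sub>R d3 \<Phi> i j k y)" for i j
  have H3d: "H3 i j differentiable (at y)" "dd v (H3 i j) y = (\<Sum>k\<in>UNIV. v$k *\<^sub>R (\<Sum>l\<in>UNIV. v$l *\<^sub>R d4 \<Phi> i j k l y))"
    if "y \<in> U" for i j y
  proof -
    show "H3 i j differentiable (at y)"
      by (rule dd_sum(2)[of UNIV U y "H3 i j" "\<lambda>k. v$k" "d3 \<Phi> i j", OF _ U that]) (auto simp: H3_def intro: smooth_diff[OF sd3])
    have "dd v (H3 i j) y = (\<Sum>k\<in>UNIV. v$k *\<^sub>R dd v (d3 \<Phi> i j k) y)"
      by (rule dd_sum(1)[of UNIV U y "H3 i j" "\<lambda>k. v$k" "d3 \<Phi> i j", OF _ U that]) (auto simp: H3_def intro: smooth_diff[OF sd3])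
    also have "\<dots> = (\<Sum>k\<in>UNIV. v$k *\<^sub>R (\<Sum>l\<in>UNIV. v$l *\<^sub>R d4 \<Phi> i j k l y))"
    proof -
      have "dd v (d3 \<Phi> i j k) y = (\<Sum>l\<in>UNIV. v$l *\<^sub>R d4 \<Phi> i j k l y)" for k
        unfolding d4_def by (rule dd_lin[OF smooth_diff[OF sd3 that]])
      then show ?thesis by simp
    qed
    finally show "dd v (H3 i j) y = (\<Sum>k\<in>UNIV. v$k *\<^sub>R (\<Sum>l\<in>UNIV. v$l *\<^sub>R d4 \<Phi> i j k l y))" .
  qed
  define H3' where "H3' i = (\<lambda>y. \<Sum>j\<in>UNIV. v$j *\<^sub>R H3 i j y)" for i
  have H3'd: "H3' i differentiable (at y)" "dd v (H3' i) y = (\<Sum>j\<in>UNIV. v$j *\<^sub>R (\<Sum>k\<in>UNIV. v$k *\<^sub>R (\<Sum>l\<in>UNIV. v$l *\<^sub>R d4 \<Phi> i j k l y)))"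
    if "y \<in> U" for i y
  proof -
    show "H3' i differentiable (at y)"
      by (rule dd_sum(2)[of UNIV U y "H3' i" "\<lambda>j. v$j" "H3 i", OF _ U that]) (auto simp: H3'_def intro: H3d(1))
    have "dd v (H3' i) y = (\<Sum>j\<in>UNIV. v$j *\<^sub>R dd v (H3 i j) y)"
      by (rule dd_sum(1)[of UNIV U y "H3' i" "\<lambda>j. v$j" "H3 i", OF _ U that]) (auto simp: H3'_def intro: H3d(1))
    then show "dd v (H3' i) y = (\<Sum>j\<in>UNIV. v$j *\<^sub>R (\<Sum>k\<in>UNIV. v$k *\<^sub>R (\<Sum>l\<in>UNIV. v$l *\<^sub>R d4 \<Phi> i j k l y)))"
      using H3d(2)[OF that] by simp
  qed
  have E4: "dd v (dd v (dd v (dd v \<Phi>))) y = (\<Sum>i\<in>UNIV. v$i *\<^sub>R (\<Sum>j\<in>UNIV. v$j *\<^sub>R (\<Sum>k\<in>UNIV. v$k *\<^sub>R (\<Sum>l\<in>UNIV. v$l *\<^sub>R d4 \<Phi> i j k l y))))"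
    if "y \<in> U" for y
  proof -
    have "dd v (dd v (dd v (dd v \<Phi>))) y = (\<Sum>i\<in>UNIV. v$i *\<^sub>R dd v (H3' i) y)"
      by (rule dd_sum(1)[of UNIV U y "dd v (dd v (dd v \<Phi>))" "\<lambda>i. v$i" H3', OF _ U that]) (auto simp: E3 H3'_def H3_def intro: H3'd(1)[unfolded H3'_def H3_def])
    then show ?thesis using H3'd(2)[OF that] by simp
  qed
  show "\<forall>y\<in>U. (dd v ^^ 2) \<Phi> y = (\<Sum>i\<in>UNIV. v$i *\<^sub>R (\<Sum>j\<in>UNIV. v$j *\<^sub>R d2 \<Phi> i j y))"
    using E2 by (simp add: numeral_eq_Suc)
  show "\<forall>y\<in>U. (dd v ^^ 3) \<Phi> y = (\<Sum>i\<in>UNIV. v$i *\<^sub>R (\<Sum>j\<in>UNIV. v$j *\<^sub>R (\<Sum>k\<in>UNIV. v$k *\<^sub>R d3 \<Phi> i j k y)))"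
    using E3 by (simp add: numeral_eq_Suc)
  show "\<forall>y\<in>U. (dd v ^^ 4) \<Phi> y = (\<Sum>i\<in>UNIV. v$i *\<^sub>R (\<Sum>j\<in>UNIV. v$j *\<^sub>R (\<Sum>k\<in>UNIV. v$k *\<^sub>R (\<Sum>l\<in>UNIV. v$l *\<^sub>R d4 \<Phi> i j k l y))))"
    using E4 by (simp add: numeral_eq_Suc)
qed

definition bil :: "'a::comm_ring_1^'n \<Rightarrow> 'a^'n \<Rightarrow> 'a" where
  "bil z w = (\<Sum>i\<in>UNIV. z$i * w$i)"

definition Apol :: "(real^'n \<Rightarrow> real^'n) \<Rightarrow> 'a::{real_algebra_1,comm_ring_1}^'n \<Rightarrow> 'a^'n" where
  "Apol \<Phi> z = (\<chi> m. \<Sum>i\<in>UNIV. \<Sum>j\<in>UNIV. z$i * z$j * of_real (d2 \<Phi> i j 0 $ m))"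
definition Bpol :: "(real^'n \<Rightarrow> real^'n) \<Rightarrow> 'a::{real_algebra_1,comm_ring_1}^'n \<Rightarrow> 'a^'n" where
  "Bpol \<Phi> z = (\<chi> m. \<Sum>i\<in>UNIV. \<Sum>j\<in>UNIV. \<Sum>k\<in>UNIV. z$i * z$j * z$k * of_real (d3 \<Phi> i j k 0 $ m))"
definition Cpol :: "(real^'n \<Rightarrow> real^'n) \<Rightarrow> 'a::{real_algebra_1,comm_ring_1}^'n \<Rightarrow> 'a^'n" where
  "Cpol \<Phi> z = (\<chi> m. \<Sum>i\<in>UNIV. \<Sum>j\<in>UNIV. \<Sum>k\<in>UNIV. \<Sum>l\<in>UNIV. z$i * z$j * z$k * z$l * of_real (d4 \<Phi> i j k l 0 $ m))"
definition Xpol :: "(real^'n \<Rightarrow> real^'n) \<Rightarrow> 'a::{real_algebra_1,comm_ring_1}^'n \<Rightarrow> 'a^'n" where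
  "Xpol \<Phi> z = (\<chi> l. bil z z * Bpol \<Phi> z $ l - 3 * bil z (Apol \<Phi> z) * Apol \<Phi> z $ l)"
definition Ypol :: "(real^'n \<Rightarrow> real^'n) \<Rightarrow> 'a::{real_algebra_1,comm_ring_1}^'n \<Rightarrow> 'a^'n" where
  "Ypol \<Phi> z = (\<chi> l. bil z z * Cpol \<Phi> z $ l - (3 * bil (Apol \<Phi> z) (Apol \<Phi> z) + 4 * bil z (Bpol \<Phi> z)) * Apol \<Phi> z $ l)"

lemma bil_real: "bil x y = x \<bullet> (y::real^'n)"
  unfolding bil_def inner_vec_def by simp

lemma alg_line:
  fixes w :: "real^'n"
  shows "(a *\<^sub>R w)$k * (b *\<^sub>R w)$l = (a *\<^sub>R w)$l * (b *\<^sub>R w)$k"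
  by simp

lemma alg_circle:
  fixes u w c P Q :: "real^'n"
  assumes "u \<bullet> u = 1" "w \<bullet> w = 1" "u \<bullet> w = 0" "c = c1 *\<^sub>R u + c2 *\<^sub>R w" "c \<noteq> 0"
    "P = (P \<bullet> u) *\<^sub>R u + (P \<bullet> w) *\<^sub>R w" "Q = (Q \<bullet> u) *\<^sub>R u + (Q \<bullet> w) *\<^sub>R w"
    "c \<bullet> P = 0" "c \<bullet> Q = 0"
  shows "P$k * Q$l = P$l * Q$k"
proof -
  define p1 p2 q1 q2 where "p1 = P \<bullet> u" "p2 = P \<bullet> w" "q1 = Q \<bullet> u" "q2 = Q \<bullet> w"
  have wu: "w \<bullet> u = 0" using assms(3) by (simp add: inner_commute)
  have cP: "c1 * p1 + c2 * p2 = 0"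
  proof -
    have "c \<bullet> P = (c1 *\<^sub>R u + c2 *\<^sub>R w) \<bullet> (p1 *\<^sub>R u + p2 *\<^sub>R w)"
      using assms(4) p1_p2_q1_q2_def arg_cong2[where f=inner, OF refl assms(6)] by simp
    also have "\<dots> = c1 * p1 + c2 * p2" using assms(1-3) wu by (simp add: inner_add_left inner_add_right)
    finally show ?thesis using assms(8) by simp
  qed
  have cQ: "c1 * q1 + c2 * q2 = 0"
  proof -
    have "c \<bullet> Q = (c1 *\<^sub>R u + c2 *\<^sub>R w) \<bullet> (q1 *\<^sub>R u + q2 *\<^sub>R w)"
      using assms(4) p1_p2_q1_q2_def arg_cong2[where f=inner, OF refl assms(7)] by simp
    also have "\<dots> = c1 * q1 + c2 * q2" using assms(1-3) wu by (simp add: inner_add_left inner_add_right)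
    finally show ?thesis using assms(9) by simp
  qed
  have "c1 \<noteq> 0 \<or> c2 \<noteq> 0" using assms(4,5) by auto
  moreover have "c1 * (p1 * q2 - p2 * q1) = 0" using cP cQ by algebra
  moreover have "c2 * (p1 * q2 - p2 * q1) = 0" using cP cQ by algebra
  ultimately have det: "p1 * q2 = p2 * q1" by auto
  have Pk: "P$x = p1 * u$x + p2 * w$x" for x
  proof -
    have "P$x = ((P \<bullet> u) *\<^sub>R u + (P \<bullet> w) *\<^sub>R w)$x" by (rule arg_cong[where f="\<lambda>z. z$x"], rule assms(6))
    then show ?thesis using p1_p2_q1_q2_def by simp
  qed
  have Qk: "Q$x = q1 * u$x + q2 * w$x" for x
  proof -
    have "Q$x = ((Q \<bullet> u) *\<^sub>R u + (Q \<bullet> w) *\<^sub>R w)$x" by (rule arg_cong[where f="\<lambda>z. z$x"], rule assms(7))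
    then show ?thesis using p1_p2_q1_q2_def by simp
  qed
  have "P$k * Q$l - P$l * Q$k = (p1 * q2 - p2 * q1) * (u$k * w$l - w$k * u$l)"
    unfolding Pk Qk by algebra
  then show ?thesis using det by simp
qed

lemma g_vals:
  fixes \<Phi> :: "real^'n \<Rightarrow> real^'n"
  assumes sm: "smooth_on \<Phi> U" and U: "open U" and D: "(\<Phi> has_derivative id) (at 0)" and "0 \<in> U"
  shows "(dd v ^^ 1) \<Phi> 0 = v" "(dd v ^^ 2) \<Phi> 0 = Apol \<Phi> v" "(dd v ^^ 3) \<Phi> 0 = Bpol \<Phi> v"
    "(dd v ^^ 4) \<Phi> 0 = Cpol \<Phi> v"
proof -
  have "id = frechet_derivative \<Phi> (at 0)" by (rule frechet_derivative_at[OF D])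
  then show "(dd v ^^ 1) \<Phi> 0 = v" by (simp add: dd_def)
  show "(dd v ^^ 2) \<Phi> 0 = Apol \<Phi> v"
    using expansions(1)[OF sm U, of v] assms(4)
    by (simp add: vec_eq_iff Apol_def sum_component sum_distrib_left mult.assoc)
  show "(dd v ^^ 3) \<Phi> 0 = Bpol \<Phi> v"
    using expansions(2)[OF sm U, of v] assms(4)
    by (simp add: vec_eq_iff Bpol_def sum_component sum_distrib_left mult.assoc)
  show "(dd v ^^ 4) \<Phi> 0 = Cpol \<Phi> v"
    using expansions(3)[OF sm U, of v] assms(4)
    by (simp add: vec_eq_iff Cpol_def sum_component sum_distrib_left mult.assoc)
qed

lemma line_ids:
  fixes \<Phi> :: "real^'n \<Rightarrow> real^'n" and v :: "real^'n"
  assumes sm: "smooth_on \<Phi> U" and U: "open U" and \<Phi>0: "\<Phi> 0 = 0" and D: "(\<Phi> has_derivative id) (at 0)"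
    and \<delta>: "\<delta> > 0" and inU: "\<forall>t. \<bar>t\<bar> < \<delta> \<longrightarrow> t *\<^sub>R v \<in> U"
    and circ: "is_circle S" and inS: "\<forall>t. \<bar>t\<bar> < \<delta> \<longrightarrow> \<Phi> (t *\<^sub>R v) \<in> S"
  shows "v$k * Xpol \<Phi> v $ l = v$l * Xpol \<Phi> v $ k \<and> v$k * Ypol \<Phi> v $ l = v$l * Ypol \<Phi> v $ k"
proof -
  define I where "I = ball (0::real) \<delta>"
  have oI: "open I" unfolding I_def by simp
  have memI: "t \<in> I \<longleftrightarrow> \<bar>t\<bar> < \<delta>" for t unfolding I_def by (simp add: dist_real_def)
  have I0: "0 \<in> I" using \<delta> memI by simp
  have U0: "0 \<in> U" using inU[rule_format, of 0] \<delta> by simp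
  define g where "g m t = (dd v ^^ m) \<Phi> (t *\<^sub>R v)" for m t
  have hd: "\<forall>m. \<forall>t\<in>I. (g m has_vector_derivative g (Suc m) t) (at t)"
    unfolding g_def using curve_deriv[OF sm] inU memI by blast
  have hd': "\<forall>t\<in>I. (g m has_vector_derivative g (m+1) t) (at t)" for m using hd by simp
  have g00: "g 0 0 = 0" by (simp add: g_def \<Phi>0)
  have g10: "g 1 0 = v" and g20: "g 2 0 = Apol \<Phi> v" and g30: "g 3 0 = Bpol \<Phi> v" and g40: "g 4 0 = Cpol \<Phi> v"
    unfolding g_def using g_vals[OF sm U D U0, of v] by simp_all
  define A where "A = Apol \<Phi> v"
  define B where "B = Bpol \<Phi> v"
  define C where "C = Cpol \<Phi> v"
  have Xeq: "Xpol \<Phi> v = (v \<bullet> v) *\<^sub>R B - (3 * (v \<bullet> A)) *\<^sub>R A"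
    by (simp add: vec_eq_iff Xpol_def bil_real A_def B_def)
  have Yeq: "Ypol \<Phi> v = (v \<bullet> v) *\<^sub>R C - (3 * (A \<bullet> A) + 4 * (v \<bullet> B)) *\<^sub>R A"
    by (simp add: vec_eq_iff Ypol_def bil_real A_def B_def C_def)
  have zeroS: "0 \<in> S" using inS[rule_format, of 0] \<Phi>0 \<delta> by simp
  have gS: "g 0 t \<in> S" if "t \<in> I" for t using inS memI that by (simp add: g_def)
  from circ[unfolded is_circle_def] show ?thesis
  proof (elim disjE exE conjE)
    fix p w :: "real^'n"
    assume w: "w \<noteq> 0" and S: "S = {p + t *\<^sub>R w |t. True}"
    obtain s0 where s0: "0 = p + s0 *\<^sub>R w" using zeroS S by auto
    define w' where "w' = (1 / (w \<bullet> w)) *\<^sub>R w"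
    define L where "L x = x - (x \<bullet> w') *\<^sub>R w" for x
    have bl: "bounded_linear L" unfolding L_def
      by (intro bounded_linear_intros)
    have ww: "w \<bullet> w \<noteq> 0" using w by simp
    have L0: "\<forall>t\<in>I. L (g 0 t) = 0"
    proof
      fix t assume "t \<in> I"
      then obtain s where "g 0 t = p + s *\<^sub>R w" using gS S by blast
      then have "g 0 t = (s - s0) *\<^sub>R w" using s0 by (simp add: algebra_simps eq_neg_iff_add_eq_0 add.commute) 
      then show "L (g 0 t) = 0" using ww by (simp add: L_def w'_def)
    qed
    have Lm: "L (g m 0) = 0" for m using lin_iter[OF oI hd bl L0] I0 by blast
    have mult: "g m 0 = (g m 0 \<bullet> w') *\<^sub>R w" for m
      using Lm[of m] by (simp add: L_def)
    obtain a1 a2 a3 a4 where "v = a1 *\<^sub>R w" "A = a2 *\<^sub>R w" "B = a3 *\<^sub>R w" "C = a4 *\<^sub>R w"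
      using mult[of 1] mult[of 2] mult[of 3] mult[of 4] g10 g20 g30 g40 A_def B_def C_def by metis
    then have "Xpol \<Phi> v = ((v \<bullet> v) * a3 - 3 * (v \<bullet> A) * a2) *\<^sub>R w"
          "Ypol \<Phi> v = ((v \<bullet> v) * a4 - (3 * (A \<bullet> A) + 4 * (v \<bullet> B)) * a2) *\<^sub>R w"
          and vw: "v = a1 *\<^sub>R w"
      unfolding Xeq Yeq by (simp_all add: algebra_simps)
    then show ?thesis by (metis alg_line)
  next
    fix c :: "real^'n" and r :: real and u w :: "real^'n"
    assume r: "r > 0" and nu: "norm u = 1" and nw: "norm w = 1" and uw: "u \<bullet> w = 0"
      and S: "S = {c + (r * cos \<theta>) *\<^sub>R u + (r * sin \<theta>) *\<^sub>R w |\<theta>. True}"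
    have uu: "u \<bullet> u = 1" using nu by (simp add: dot_square_norm)
    have ww: "w \<bullet> w = 1" using nw by (simp add: dot_square_norm)
    have wu: "w \<bullet> u = 0" using uw by (simp add: inner_commute)
    have ip: "(a *\<^sub>R u + b *\<^sub>R w) \<bullet> (a' *\<^sub>R u + b' *\<^sub>R w) = a * a' + b * b'" for a b a' b'
      using uu ww uw wu by (simp add: inner_add_left inner_add_right)
    obtain \<theta>0 where th0: "0 = c + (r * cos \<theta>0) *\<^sub>R u + (r * sin \<theta>0) *\<^sub>R w" using zeroS S by auto
    define c1 c2 where "c1 = - (r * cos \<theta>0)" "c2 = - (r * sin \<theta>0)"
    have cdef: "c = c1 *\<^sub>R u + c2 *\<^sub>R w" using th0 unfolding c1_c2_def
      by (simp add: algebra_simps eq_neg_iff_add_eq_0 add.commute)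
    have cc: "c \<bullet> c = r\<^sup>2"
    proof -
      have "c \<bullet> c = c1 * c1 + c2 * c2" unfolding cdef by (rule ip)
      also have "\<dots> = r\<^sup>2 * ((sin \<theta>0)\<^sup>2 + (cos \<theta>0)\<^sup>2)" unfolding c1_c2_def power2_eq_square by algebra
      finally show ?thesis by simp
    qed
    have cnz: "c \<noteq> 0" using cc r by auto
    define L where "L x = x - (x \<bullet> u) *\<^sub>R u - (x \<bullet> w) *\<^sub>R w" for x
    have bl: "bounded_linear L" unfolding L_def
      by (intro bounded_linear_intros)
    have gform: "\<exists>\<theta>. g 0 t = c + (r * cos \<theta>) *\<^sub>R u + (r * sin \<theta>) *\<^sub>R w" if "t \<in> I" for t
      using gS[OF that] S by blast
    have L0: "\<forall>t\<in>I. L (g 0 t) = 0"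
    proof
      fix t assume "t \<in> I"
      then obtain \<theta> where th: "g 0 t = c + (r * cos \<theta>) *\<^sub>R u + (r * sin \<theta>) *\<^sub>R w" using gform by blast
      have "g 0 t = (c1 + r * cos \<theta>) *\<^sub>R u + (c2 + r * sin \<theta>) *\<^sub>R w" unfolding th cdef by (simp add: algebra_simps)
      then show "L (g 0 t) = 0" unfolding L_def using uu ww uw wu
        by (simp add: inner_add_left inner_add_right algebra_simps)
    qed
    have Lm: "L (g m 0) = 0" for m using lin_iter[OF oI hd bl L0] I0 by blast
    have plane: "P = (P \<bullet> u) *\<^sub>R u + (P \<bullet> w) *\<^sub>R w" if "L P = 0" for P
      using that unfolding L_def by (simp add: algebra_simps)
    have S0: "\<forall>t\<in>I. g 0 t \<bullet> g 0 t - 2 * (c \<bullet> g 0 t) = 0"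
    proof
      fix t assume "t \<in> I"
      then obtain \<theta> where th: "g 0 t = c + (r * cos \<theta>) *\<^sub>R u + (r * sin \<theta>) *\<^sub>R w" using gform by blast
      define e where "e = (r * cos \<theta>) *\<^sub>R u + (r * sin \<theta>) *\<^sub>R w"
      have ee: "e \<bullet> e = r\<^sup>2"
      proof -
        have "e \<bullet> e = (r * cos \<theta>) * (r * cos \<theta>) + (r * sin \<theta>) * (r * sin \<theta>)" unfolding e_def by (rule ip)
        also have "\<dots> = r\<^sup>2 * ((sin \<theta>)\<^sup>2 + (cos \<theta>)\<^sup>2)" unfolding power2_eq_square by algebra
        finally show ?thesis by simp
      qed
      have "g 0 t = c + e" unfolding th e_def by simp
      then show "g 0 t \<bullet> g 0 t - 2 * (c \<bullet> g 0 t) = 0"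
        using ee cc by (simp add: inner_add_left inner_add_right inner_commute)
    qed
    have d0: "\<forall>t\<in>I. ((\<lambda>t. g 0 t \<bullet> g 0 t - 2 * (c \<bullet> g 0 t)) has_vector_derivative
                (2 * (g 0 t \<bullet> g 1 t) - 2 * (c \<bullet> g 1 t))) (at t)"
    proof
      fix t assume t: "t \<in> I"
      have h0: "(g 0 has_vector_derivative g 1 t) (at t)" using hd'[of 0] t by (simp add: eval_nat_numeral)
      show "((\<lambda>t. g 0 t \<bullet> g 0 t - 2 * (c \<bullet> g 0 t)) has_vector_derivative
                (2 * (g 0 t \<bullet> g 1 t) - 2 * (c \<bullet> g 1 t))) (at t)"
        by (rule has_vector_derivative_eq_rhs, (rule has_vector_derivative_diff has_vector_derivative_mult_right inner_vd h0 has_vector_derivative_const)+, simp add: inner_commute)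
    qed
    have S1: "\<forall>t\<in>I. g 0 t \<bullet> g 1 t - c \<bullet> g 1 t = 0"
      using zero_deriv[OF oI S0 d0] by simp
    have d1: "\<forall>t\<in>I. ((\<lambda>t. g 0 t \<bullet> g 1 t - c \<bullet> g 1 t) has_vector_derivative
                (g 0 t \<bullet> g 2 t + g 1 t \<bullet> g 1 t - c \<bullet> g 2 t)) (at t)"
    proof
      fix t assume t: "t \<in> I"
      have h0: "(g 0 has_vector_derivative g 1 t) (at t)" using hd'[of 0] t by (simp add: eval_nat_numeral)
      have h1: "(g 1 has_vector_derivative g 2 t) (at t)" using hd'[of 1] t by (simp add: eval_nat_numeral)
      show "((\<lambda>t. g 0 t \<bullet> g 1 t - c \<bullet> g 1 t) has_vector_derivative
                (g 0 t \<bullet> g 2 t + g 1 t \<bullet> g 1 t - c \<bullet> g 2 t)) (at t)"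
        by (rule has_vector_derivative_eq_rhs, (rule has_vector_derivative_diff inner_vd h0 h1 has_vector_derivative_const)+, simp add: inner_commute)
    qed
    have S2: "\<forall>t\<in>I. g 0 t \<bullet> g 2 t + g 1 t \<bullet> g 1 t - c \<bullet> g 2 t = 0"
      using zero_deriv[OF oI S1 d1] by simp
    have d2: "\<forall>t\<in>I. ((\<lambda>t. g 0 t \<bullet> g 2 t + g 1 t \<bullet> g 1 t - c \<bullet> g 2 t) has_vector_derivative
                (g 0 t \<bullet> g 3 t + 3 * (g 1 t \<bullet> g 2 t) - c \<bullet> g 3 t)) (at t)"
    proof
      fix t assume t: "t \<in> I"
      have h0: "(g 0 has_vector_derivative g 1 t) (at t)" using hd'[of 0] t by (simp add: eval_nat_numeral)
      have h1: "(g 1 has_vector_derivative g 2 t) (at t)" using hd'[of 1] t by (simp add: eval_nat_numeral)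
      have h2: "(g 2 has_vector_derivative g 3 t) (at t)" using hd'[of 2] t by (simp add: eval_nat_numeral)
      show "((\<lambda>t. g 0 t \<bullet> g 2 t + g 1 t \<bullet> g 1 t - c \<bullet> g 2 t) has_vector_derivative
                (g 0 t \<bullet> g 3 t + 3 * (g 1 t \<bullet> g 2 t) - c \<bullet> g 3 t)) (at t)"
        by (rule has_vector_derivative_eq_rhs, (rule has_vector_derivative_diff has_vector_derivative_add inner_vd h0 h1 h2 has_vector_derivative_const)+, simp add: inner_commute)
    qed
    have S3: "\<forall>t\<in>I. g 0 t \<bullet> g 3 t + 3 * (g 1 t \<bullet> g 2 t) - c \<bullet> g 3 t = 0"
      using zero_deriv[OF oI S2 d2] by simp
    have d3: "\<forall>t\<in>I. ((\<lambda>t. g 0 t \<bullet> g 3 t + 3 * (g 1 t \<bullet> g 2 t) - c \<bullet> g 3 t) has_vector_derivative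
                (g 0 t \<bullet> g 4 t + 4 * (g 1 t \<bullet> g 3 t) + 3 * (g 2 t \<bullet> g 2 t) - c \<bullet> g 4 t)) (at t)"
    proof
      fix t assume t: "t \<in> I"
      have h0: "(g 0 has_vector_derivative g 1 t) (at t)" using hd'[of 0] t by (simp add: eval_nat_numeral)
      have h1: "(g 1 has_vector_derivative g 2 t) (at t)" using hd'[of 1] t by (simp add: eval_nat_numeral)
      have h2: "(g 2 has_vector_derivative g 3 t) (at t)" using hd'[of 2] t by (simp add: eval_nat_numeral)
      have h3: "(g 3 has_vector_derivative g 4 t) (at t)" using hd'[of 3] t by (simp add: eval_nat_numeral)
      show "((\<lambda>t. g 0 t \<bullet> g 3 t + 3 * (g 1 t \<bullet> g 2 t) - c \<bullet> g 3 t) has_vector_derivative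
                (g 0 t \<bullet> g 4 t + 4 * (g 1 t \<bullet> g 3 t) + 3 * (g 2 t \<bullet> g 2 t) - c \<bullet> g 4 t)) (at t)"
        by (rule has_vector_derivative_eq_rhs, (rule has_vector_derivative_diff has_vector_derivative_add has_vector_derivative_mult_right inner_vd h0 h1 h2 h3 has_vector_derivative_const)+, simp add: inner_commute algebra_simps)
    qed
    have S4: "\<forall>t\<in>I. g 0 t \<bullet> g 4 t + 4 * (g 1 t \<bullet> g 3 t) + 3 * (g 2 t \<bullet> g 2 t) - c \<bullet> g 4 t = 0"
      using zero_deriv[OF oI S3 d3] by simp
    have e1: "c \<bullet> v = 0" using S1[rule_format, OF I0] g00 g10 by (simp add: inner_commute)
    have e2: "c \<bullet> A = v \<bullet> v" using S2[rule_format, OF I0] g00 g10 g20 A_def by simp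
    have e3: "c \<bullet> B = 3 * (v \<bullet> A)" using S3[rule_format, OF I0] g00 g10 g20 g30 A_def B_def by simp
    have e4: "c \<bullet> C = 4 * (v \<bullet> B) + 3 * (A \<bullet> A)" using S4[rule_format, OF I0] g00 g10 g20 g30 g40 A_def B_def C_def by (simp add: eval_nat_numeral)
    have Pv: "v = (v \<bullet> u) *\<^sub>R u + (v \<bullet> w) *\<^sub>R w" using plane Lm[of 1] g10 by simp
    have LA: "L A = 0" using Lm[of 2] g20 A_def by simp
    have LB: "L B = 0" using Lm[of 3] g30 B_def by simp
    have LC: "L C = 0" using Lm[of 4] g40 C_def by simp
    have lin: "linear L" using bl bounded_linear.linear by blast
    have "L (Xpol \<Phi> v) = 0" unfolding Xeq using LA LB linear_diff[OF lin] linear_scale[OF lin] by simp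
    then have PX: "Xpol \<Phi> v = (Xpol \<Phi> v \<bullet> u) *\<^sub>R u + (Xpol \<Phi> v \<bullet> w) *\<^sub>R w" by (rule plane)
    have "L (Ypol \<Phi> v) = 0" unfolding Yeq using LA LC linear_diff[OF lin] linear_scale[OF lin] by simp
    then have PY: "Ypol \<Phi> v = (Ypol \<Phi> v \<bullet> u) *\<^sub>R u + (Ypol \<Phi> v \<bullet> w) *\<^sub>R w" by (rule plane)
    have cX: "c \<bullet> Xpol \<Phi> v = 0" unfolding Xeq using e2 e3 by (simp add: inner_diff_right algebra_simps)
    have cY: "c \<bullet> Ypol \<Phi> v = 0" unfolding Yeq using e2 e4 by (simp add: inner_diff_right algebra_simps)
    show ?thesis
      using alg_circle[OF uu ww uw cdef cnz Pv PX e1 cX] alg_circle[OF uu ww uw cdef cnz Pv PY e1 cY] by simp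
  qed
qed

definition mono_ev :: "('n \<Rightarrow> nat) \<Rightarrow> real^'n \<Rightarrow> real" where
  "mono_ev \<alpha> x = (\<Prod>i\<in>UNIV. (x $ i) ^ \<alpha> i)"

definition is_hpoly :: "nat \<Rightarrow> (real^'n \<Rightarrow> real) \<Rightarrow> bool" where
  "is_hpoly d F \<longleftrightarrow> (\<exists>a A. finite A \<and> (\<forall>\<alpha>\<in>A. (\<Sum>i\<in>UNIV. \<alpha> i) = d) \<and> (\<forall>x. F x = hpoly_eval a A x))"

lemma hpoly_eval_mono: "hpoly_eval a A x = (\<Sum>\<alpha>\<in>A. a \<alpha> * mono_ev \<alpha> x)"
  unfolding hpoly_eval_def mono_ev_def ..

lemma mono_add: "mono_ev (\<lambda>i. \<alpha> i + \<beta> i) x = mono_ev \<alpha> x * mono_ev \<beta> x"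
  unfolding mono_ev_def by (simp add: power_add prod.distrib)

lemma hp_zero: "is_hpoly d (\<lambda>x. 0)"
  unfolding is_hpoly_def hpoly_eval_def by (rule exI[of _ "\<lambda>_. 0"], rule exI[of _ "{}"]) simp

lemma hp_const: "is_hpoly 0 (\<lambda>x. c)"
  unfolding is_hpoly_def hpoly_eval_def by (rule exI[of _ "\<lambda>_. c"], rule exI[of _ "{\<lambda>_. 0}"]) simp

lemma hp_coord: "is_hpoly 1 (\<lambda>x::real^'n. x $ i)"
  unfolding is_hpoly_def
proof (rule exI[of _ "\<lambda>_. 1"], rule exI[of _ "{\<lambda>j. if j = i then 1 else 0}"], intro conjI allI ballI)
  show "finite {\<lambda>j. if j = i then 1 else 0::nat}" by simp
  fix \<alpha> assume "\<alpha> \<in> {\<lambda>j. if j = i then 1 else 0::nat}"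
  then show "(\<Sum>i\<in>UNIV. \<alpha> i) = 1" by simp
next
  fix x :: "real^'n"
  have "(\<Prod>j\<in>UNIV. x $ j ^ (if j = i then 1 else 0)) = (\<Prod>j\<in>UNIV. if j = i then x $ j else 1)"
    by (rule prod.cong) auto
  also have "\<dots> = x $ i" by simp
  finally show "x $ i = hpoly_eval (\<lambda>_. 1) {\<lambda>j. if j = i then 1 else 0} x"
    unfolding hpoly_eval_def by simp
qed

lemma hp_scale:
  fixes F :: "real^'n \<Rightarrow> real"
  assumes "is_hpoly d F" shows "is_hpoly d (\<lambda>x. c * F x)"
proof -
  obtain a A where A: "finite A" "\<forall>\<alpha>\<in>A. (\<Sum>i\<in>UNIV. \<alpha> i) = d" "\<forall>x. F x = hpoly_eval a A x"
    using assms(1) unfolding is_hpoly_def by blast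
  have "c * F x = hpoly_eval (\<lambda>\<alpha>. c * a \<alpha>) A x" for x
    using A(3) by (simp add: hpoly_eval_mono sum_distrib_left mult.assoc)
  then show ?thesis unfolding is_hpoly_def using A by blast
qed

lemma hp_add:
  fixes F G :: "real^'n \<Rightarrow> real"
  assumes "is_hpoly d F" "is_hpoly d G"
  shows "is_hpoly d (\<lambda>x. F x + G x)"
proof -
  obtain a A where A: "finite A" "\<forall>\<alpha>\<in>A. (\<Sum>i\<in>UNIV. \<alpha> i) = d" "\<forall>x. F x = hpoly_eval a A x"
    using assms(1) unfolding is_hpoly_def by blast
  obtain b B where B: "finite B" "\<forall>\<alpha>\<in>B. (\<Sum>i\<in>UNIV. \<alpha> i) = d" "\<forall>x. G x = hpoly_eval b B x"
    using assms(2) unfolding is_hpoly_def by blast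
  define c where "c \<alpha> = (if \<alpha> \<in> A then a \<alpha> else 0) + (if \<alpha> \<in> B then b \<alpha> else 0)" for \<alpha>
  have "F x + G x = hpoly_eval c (A \<union> B) x" for x
  proof -
    have fu: "finite (A \<union> B)" using A B by simp
    have 1: "(\<Sum>\<alpha>\<in>A \<union> B. (if \<alpha> \<in> A then a \<alpha> * mono_ev \<alpha> x else 0)) = (\<Sum>\<alpha>\<in>A. a \<alpha> * mono_ev \<alpha> x)"
      using sum.inter_restrict[OF fu, of "\<lambda>\<alpha>. a \<alpha> * mono_ev \<alpha> x" A] by (simp add: Int_absorb1)
    have 2: "(\<Sum>\<alpha>\<in>A \<union> B. (if \<alpha> \<in> B then b \<alpha> * mono_ev \<alpha> x else 0)) = (\<Sum>\<alpha>\<in>B. b \<alpha> * mono_ev \<alpha> x)"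
      using sum.inter_restrict[OF fu, of "\<lambda>\<alpha>. b \<alpha> * mono_ev \<alpha> x" B] by (simp add: Int_absorb1)
    have "hpoly_eval c (A \<union> B) x = (\<Sum>\<alpha>\<in>A \<union> B. (if \<alpha> \<in> A then a \<alpha> * mono_ev \<alpha> x else 0))
       + (\<Sum>\<alpha>\<in>A \<union> B. (if \<alpha> \<in> B then b \<alpha> * mono_ev \<alpha> x else 0))"
      unfolding hpoly_eval_mono c_def sum.distrib[symmetric] by (rule sum.cong) (auto simp: distrib_right)
    then show ?thesis using 1 2 A(3) B(3) by (simp add: hpoly_eval_mono)
  qed
  then show ?thesis unfolding is_hpoly_def using A B by (intro exI[of _ c] exI[of _ "A \<union> B"]) auto
qed

lemma hp_mult:
  fixes F G :: "real^'n \<Rightarrow> real"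
  assumes "is_hpoly d F" "is_hpoly e G"
  shows "is_hpoly (d + e) (\<lambda>x. F x * G x)"
proof -
  obtain a A where A: "finite A" "\<forall>\<alpha>\<in>A. (\<Sum>i\<in>UNIV. \<alpha> i) = d" "\<forall>x. F x = hpoly_eval a A x"
    using assms(1) unfolding is_hpoly_def by blast
  obtain b B where B: "finite B" "\<forall>\<alpha>\<in>B. (\<Sum>i\<in>UNIV. \<alpha> i) = e" "\<forall>x. G x = hpoly_eval b B x"
    using assms(2) unfolding is_hpoly_def by blast
  define pl where "pl p = (\<lambda>i. fst p i + snd p i)" for p :: "('n \<Rightarrow> nat) \<times> ('n \<Rightarrow> nat)"
  define T where "T = pl ` (A \<times> B)"
  define c where "c \<gamma> = (\<Sum>p\<in>{p. p \<in> A \<times> B \<and> pl p = \<gamma>}. a (fst p) * b (snd p))" for \<gamma>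
  have fAB: "finite (A \<times> B)" using A B by simp
  have fT: "finite T" unfolding T_def using fAB by simp
  have "F x * G x = hpoly_eval c T x" for x
  proof -
    have "F x * G x = (\<Sum>\<alpha>\<in>A. \<Sum>\<beta>\<in>B. (a \<alpha> * mono_ev \<alpha> x) * (b \<beta> * mono_ev \<beta> x))"
      using A(3) B(3) by (simp add: hpoly_eval_mono sum_product)
    also have "\<dots> = (\<Sum>p\<in>A \<times> B. a (fst p) * b (snd p) * mono_ev (pl p) x)"
      unfolding sum.cartesian_product pl_def by (rule sum.cong) (auto simp: mono_add)
    also have "\<dots> = (\<Sum>\<gamma>\<in>T. \<Sum>p\<in>{p. p \<in> A \<times> B \<and> pl p = \<gamma>}. a (fst p) * b (snd p) * mono_ev (pl p) x)"
      by (rule sum.group[symmetric, OF fAB fT]) (simp add: T_def)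
    also have "\<dots> = (\<Sum>\<gamma>\<in>T. c \<gamma> * mono_ev \<gamma> x)"
      unfolding c_def sum_distrib_right by (rule sum.cong) auto
    finally show ?thesis by (simp add: hpoly_eval_mono)
  qed
  moreover have "\<forall>\<gamma>\<in>T. (\<Sum>i\<in>UNIV. \<gamma> i) = d + e"
    unfolding T_def pl_def using A(2) B(2) by (auto simp: sum.distrib)
  ultimately show ?thesis unfolding is_hpoly_def using fT by blast
qed

lemma hp_sum:
  fixes F :: "'i \<Rightarrow> real^'n \<Rightarrow> real"
  assumes "finite I" "\<And>i. i \<in> I \<Longrightarrow> is_hpoly d (F i)"
  shows "is_hpoly d (\<lambda>x. \<Sum>i\<in>I. F i x)"
  using assms
proof (induction I rule: finite_induct)
  case empty then show ?case by (simp add: hp_zero)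
next
  case (insert j I)
  then show ?case by (simp add: hp_add)
qed

lemma hp_diff: "is_hpoly d (F::real^'n \<Rightarrow> real) \<Longrightarrow> is_hpoly d G \<Longrightarrow> is_hpoly d (\<lambda>x. F x - G x)"
  using hp_add[of d F "\<lambda>x. (-1) * G x"] hp_scale[of d G "-1"] by simp

lemma hp_mult': "is_hpoly d (F::real^'n \<Rightarrow> real) \<Longrightarrow> is_hpoly e G \<Longrightarrow> k = d + e \<Longrightarrow> is_hpoly k (\<lambda>x. F x * G x)"
  using hp_mult by blast

definition ispoly :: "(complex \<Rightarrow> complex) \<Rightarrow> bool" where
  "ispoly \<phi> \<longleftrightarrow> (\<exists>q. \<forall>s. \<phi> s = poly q s)"

lemma ip_const: "ispoly (\<lambda>s. c)"
  unfolding ispoly_def by (rule exI[of _ "[:c:]"]) simp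

lemma ip_id: "ispoly (\<lambda>s. s)"
  unfolding ispoly_def by (rule exI[of _ "[:0, 1:]"]) simp

lemma ip_add: "ispoly f \<Longrightarrow> ispoly g \<Longrightarrow> ispoly (\<lambda>s. f s + g s)"
proof -
  assume "ispoly f" "ispoly g"
  then obtain p q where "\<forall>s. f s = poly p s" "\<forall>s. g s = poly q s" unfolding ispoly_def by blast
  then have "\<forall>s. f s + g s = poly (p + q) s" by (simp add: poly_add)
  then show ?thesis unfolding ispoly_def by blast
qed

lemma ip_diff: "ispoly f \<Longrightarrow> ispoly g \<Longrightarrow> ispoly (\<lambda>s. f s - g s)"
proof -
  assume "ispoly f" "ispoly g"
  then obtain p q where "\<forall>s. f s = poly p s" "\<forall>s. g s = poly q s" unfolding ispoly_def by blast
  then have "\<forall>s. f s - g s = poly (p - q) s" by (simp add: poly_diff)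
  then show ?thesis unfolding ispoly_def by blast
qed

lemma ip_mult: "ispoly f \<Longrightarrow> ispoly g \<Longrightarrow> ispoly (\<lambda>s. f s * g s)"
proof -
  assume "ispoly f" "ispoly g"
  then obtain p q where "\<forall>s. f s = poly p s" "\<forall>s. g s = poly q s" unfolding ispoly_def by blast
  then have "\<forall>s. f s * g s = poly (p * q) s" by (simp add: poly_mult)
  then show ?thesis unfolding ispoly_def by blast
qed

lemma ip_sum: "finite I \<Longrightarrow> (\<And>i. i \<in> I \<Longrightarrow> ispoly (f i)) \<Longrightarrow> ispoly (\<lambda>s. \<Sum>i\<in>I. f i s)"
proof (induction I rule: finite_induct)
  case empty then show ?case by (simp add: ip_const)
next
  case (insert j I) then show ?case by (simp add: ip_add)
qed

lemma ip_zero: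
  assumes "ispoly f" "infinite Z" "\<forall>s\<in>Z. f s = 0"
  shows "f x = 0"
proof -
  obtain q where q: "\<forall>s. f s = poly q s" using assms(1) unfolding ispoly_def by blast
  have "q = 0"
  proof (rule ccontr)
    assume "q \<noteq> 0"
    then have "finite {s. poly q s = 0}" by (rule poly_roots_finite)
    moreover have "Z \<subseteq> {s. poly q s = 0}" using assms(3) q by auto
    ultimately show False using assms(2) finite_subset by blast
  qed
  then show ?thesis using q by simp
qed

lemma ip_zero_at0:
  assumes "ispoly f" "\<forall>s. s \<noteq> 0 \<longrightarrow> f s = 0"
  shows "f 0 = 0"
proof (rule ip_zero[OF assms(1), of "UNIV - {0}"])
  show "infinite (UNIV - {0::complex})" by (rule Diff_infinite_finite) (simp_all add: infinite_UNIV_char_0)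
  show "\<forall>s\<in>UNIV - {0}. f s = 0" using assms(2) by blast
qed

lemma ip_real_zero:
  assumes "ispoly f" "\<forall>r::real. f (of_real r) = 0"
  shows "f x = 0"
proof (rule ip_zero[OF assms(1), of "range complex_of_real"])
  show "infinite (range complex_of_real)"
  proof
    assume "finite (range complex_of_real)"
    then have "finite (UNIV::real set)" using finite_imageD[of complex_of_real UNIV] inj_of_real by blast
    then show False using infinite_UNIV_char_0 by blast
  qed
  show "\<forall>s\<in>range complex_of_real. f s = 0" using assms(2) by blast
qed

lemma ip_factor:
  assumes "ispoly f" "f 0 = 0"
  shows "\<exists>h. ispoly h \<and> (\<forall>s. f s = s * h s)"
proof -
  obtain q where q: "\<forall>s. f s = poly q s" using assms(1) unfolding ispoly_def by blast
  obtain a p where ap: "q = pCons a p" by (cases q) auto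
  have "a = 0" using assms(2) q ap by simp
  then have "\<forall>s. f s = s * poly p s" using q ap by simp
  then show ?thesis unfolding ispoly_def by blast
qed

definition lineC :: "complex^'n \<Rightarrow> complex^'n \<Rightarrow> complex \<Rightarrow> complex^'n" where
  "lineC z w s = (\<chi> i. z$i + s * w$i)"

definition PF :: "(complex^'n \<Rightarrow> complex) \<Rightarrow> bool" where
  "PF F \<longleftrightarrow> (\<forall>z w. ispoly (\<lambda>s. F (lineC z w s)))"

lemma PF_const: "PF (\<lambda>z. c)"
  unfolding PF_def by (simp add: ip_const)

lemma PF_coord: "PF (\<lambda>z. z $ i)"
  unfolding PF_def lineC_def by (auto intro!: ip_add ip_mult ip_const ip_id)

lemma PF_add: "PF F \<Longrightarrow> PF G \<Longrightarrow> PF (\<lambda>z. F z + G z)"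
  unfolding PF_def by (simp add: ip_add)

lemma PF_diff: "PF F \<Longrightarrow> PF G \<Longrightarrow> PF (\<lambda>z. F z - G z)"
  unfolding PF_def by (simp add: ip_diff)

lemma PF_mult: "PF F \<Longrightarrow> PF G \<Longrightarrow> PF (\<lambda>z. F z * G z)"
  unfolding PF_def by (simp add: ip_mult)

lemma PF_sum: "finite I \<Longrightarrow> (\<And>i. i \<in> I \<Longrightarrow> PF (F i)) \<Longrightarrow> PF (\<lambda>z. \<Sum>i\<in>I. F i z)"
  unfolding PF_def by (simp add: ip_sum)

definition IXp :: "(real^'n \<Rightarrow> real^'n) \<Rightarrow> 'n \<Rightarrow> 'n \<Rightarrow> 'a::{real_algebra_1,comm_ring_1}^'n \<Rightarrow> 'a" where
  "IXp \<Phi> k l z = z$k * Xpol \<Phi> z $ l - z$l * Xpol \<Phi> z $ k"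
definition IYp :: "(real^'n \<Rightarrow> real^'n) \<Rightarrow> 'n \<Rightarrow> 'n \<Rightarrow> 'a::{real_algebra_1,comm_ring_1}^'n \<Rightarrow> 'a" where
  "IYp \<Phi> k l z = z$k * Ypol \<Phi> z $ l - z$l * Ypol \<Phi> z $ k"

lemma m2: "is_hpoly 2 (\<lambda>x::real^'n. x$i * x$j * c)"
  by (rule hp_mult'[OF hp_mult'[OF hp_coord hp_coord refl] hp_const]) simp
lemma m3: "is_hpoly 3 (\<lambda>x::real^'n. x$i * x$j * x$k * c)"
  by (rule hp_mult'[OF hp_mult'[OF hp_mult'[OF hp_coord hp_coord refl] hp_coord refl] hp_const]) simp
lemma m4: "is_hpoly 4 (\<lambda>x::real^'n. x$i * x$j * x$k * x$l * c)"
  by (rule hp_mult'[OF hp_mult'[OF hp_mult'[OF hp_mult'[OF hp_coord hp_coord refl] hp_coord refl] hp_coord refl] hp_const]) simp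

lemma hA: "is_hpoly 2 (\<lambda>x::real^'n. Apol \<Phi> x $ m)"
  unfolding Apol_def vec_lambda_beta by (intro hp_sum m2) simp_all
lemma hB: "is_hpoly 3 (\<lambda>x::real^'n. Bpol \<Phi> x $ m)"
  unfolding Bpol_def vec_lambda_beta by (intro hp_sum m3) simp_all
lemma hC: "is_hpoly 4 (\<lambda>x::real^'n. Cpol \<Phi> x $ m)"
  unfolding Cpol_def vec_lambda_beta by (intro hp_sum m4) simp_all

lemma hbil:
  assumes "\<And>i. is_hpoly d (\<lambda>x::real^'n. F x $ i)" "\<And>i. is_hpoly e (\<lambda>x::real^'n. G x $ i)"
  shows "is_hpoly (d + e) (\<lambda>x. bil (F x) (G x))"
  unfolding bil_def by (intro hp_sum hp_mult assms) simp_all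

lemma hId: "is_hpoly 1 (\<lambda>x::real^'n. (\<lambda>x. x) x $ i)" by (rule hp_coord)

lemma hX: "is_hpoly 5 (\<lambda>x::real^'n. Xpol \<Phi> x $ l)"
proof -
  have 1: "is_hpoly 5 (\<lambda>x::real^'n. bil x x * Bpol \<Phi> x $ l)"
    by (rule hp_mult'[OF hbil[OF hId hId, simplified] hB]) simp
  have 2: "is_hpoly 5 (\<lambda>x::real^'n. 3 * bil x (Apol \<Phi> x) * Apol \<Phi> x $ l)"
    by (rule hp_mult'[OF hp_mult'[OF hp_const hbil[OF hId hA, simplified]] hA]) simp_all
  show ?thesis unfolding Xpol_def vec_lambda_beta by (rule hp_diff[OF 1 2])
qed

lemma hY: "is_hpoly 6 (\<lambda>x::real^'n. Ypol \<Phi> x $ l)"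
proof -
  have 1: "is_hpoly 6 (\<lambda>x::real^'n. bil x x * Cpol \<Phi> x $ l)"
    by (rule hp_mult'[OF hbil[OF hId hId, simplified] hC]) simp
  have a: "is_hpoly 4 (\<lambda>x::real^'n. 3 * bil (Apol \<Phi> x) (Apol \<Phi> x))"
    by (rule hp_mult'[OF hp_const hbil[OF hA hA]]) simp
  have b: "is_hpoly 4 (\<lambda>x::real^'n. 4 * bil x (Bpol \<Phi> x))"
    by (rule hp_mult'[OF hp_const hbil[OF hId hB, simplified]]) simp
  have 2: "is_hpoly 6 (\<lambda>x::real^'n. (3 * bil (Apol \<Phi> x) (Apol \<Phi> x) + 4 * bil x (Bpol \<Phi> x)) * Apol \<Phi> x $ l)"
    by (rule hp_mult'[OF hp_add[OF a b] hA]) simp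
  show ?thesis unfolding Ypol_def vec_lambda_beta by (rule hp_diff[OF 1 2])
qed

lemma hIX: "is_hpoly 6 (\<lambda>x::real^'n. IXp \<Phi> k l x)"
  unfolding IXp_def by (intro hp_diff hp_mult'[OF hp_coord hX]) simp_all

lemma hIY: "is_hpoly 7 (\<lambda>x::real^'n. IYp \<Phi> k l x)"
  unfolding IYp_def by (intro hp_diff hp_mult'[OF hp_coord hY]) simp_all

lemma real_ids:
  fixes \<Phi> :: "real^'n \<Rightarrow> real^'n"
  assumes zd: "zariski_dense_lines \<L>" and germ: "smooth_diffeo_germ_id \<Phi> U"
    and circ: "\<forall>L\<in>\<L>. \<exists>\<epsilon>>0. L \<inter> ball 0 \<epsilon> \<subseteq> U \<and> (\<exists>S. is_circle S \<and> \<Phi> ` (L \<inter> ball 0 \<epsilon>) \<subseteq> S)"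
  shows "IXp \<Phi> k l (x::real^'n) = (0::real) \<and> IYp \<Phi> k l x = (0::real)"
proof -
  have U: "open U" and sm: "smooth_on \<Phi> U" and \<Phi>0: "\<Phi> 0 = 0" and D: "(\<Phi> has_derivative id) (at 0)"
    using germ unfolding smooth_diffeo_germ_id_def by (simp_all only:)
  have onL: "IXp \<Phi> k l x = 0 \<and> IYp \<Phi> k l x = 0" if L: "L \<in> \<L>" and xL: "x \<in> L" for L and x :: "real^'n"
  proof (cases "x = 0")
    case True then show ?thesis by (simp add: IXp_def IYp_def)
  next
    case False
    have "line_through_0 L" using zd L unfolding zariski_dense_lines_def by (meson conjunct1 bspec)
    then obtain v where v: "v \<noteq> 0" "L = {t *\<^sub>R v |t. True}" unfolding line_through_0_def by blast
    obtain \<epsilon> S where \<epsilon>: "\<epsilon> > 0" "L \<inter> ball 0 \<epsilon> \<subseteq> U" "is_circle S" "\<Phi> ` (L \<inter> ball 0 \<epsilon>) \<subseteq> S"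
      using circ L by blast
    obtain t0 where t0: "x = t0 *\<^sub>R v" using xL v by blast
    define \<delta> where "\<delta> = \<epsilon> / norm x"
    have \<delta>: "\<delta> > 0" using \<epsilon>(1) False by (simp add: \<delta>_def)
    have inB: "t *\<^sub>R x \<in> L \<inter> ball 0 \<epsilon>" if "\<bar>t\<bar> < \<delta>" for t
    proof
      show "t *\<^sub>R x \<in> L" using t0 v(2) by auto
      have "norm (t *\<^sub>R x) = \<bar>t\<bar> * norm x" by simp
      also have "\<dots> < \<delta> * norm x" using that False by (simp add: mult_strict_right_mono)
      also have "\<dots> = \<epsilon>" using False by (simp add: \<delta>_def)
      finally show "t *\<^sub>R x \<in> ball 0 \<epsilon>" by simp
    qed
    have inU: "\<forall>t. \<bar>t\<bar> < \<delta> \<longrightarrow> t *\<^sub>R x \<in> U" using inB \<epsilon>(2) by blast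
    have inS: "\<forall>t. \<bar>t\<bar> < \<delta> \<longrightarrow> \<Phi> (t *\<^sub>R x) \<in> S" using inB \<epsilon>(4) by blast
    from line_ids[OF sm U \<Phi>0 D \<delta> inU \<epsilon>(3) inS, of k l]
    show ?thesis by (simp add: IXp_def IYp_def)
  qed
  have dens: "\<And>d A a. finite A \<Longrightarrow> (\<forall>\<alpha>\<in>A. (\<Sum>i\<in>UNIV. \<alpha> i) = d) \<Longrightarrow>
        (\<forall>L\<in>\<L>. \<forall>x\<in>L. hpoly_eval a A x = 0) \<Longrightarrow> (\<forall>x. hpoly_eval a A x = 0)"
    using zd unfolding zariski_dense_lines_def by (meson conjunct2)
  obtain a A where A: "finite A" "\<forall>\<alpha>\<in>A. (\<Sum>i\<in>UNIV. \<alpha> i) = 6" "\<forall>x. IXp \<Phi> k l x = hpoly_eval a A x"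
    using hIX[of \<Phi> k l] unfolding is_hpoly_def by blast
  obtain b B where B: "finite B" "\<forall>\<alpha>\<in>B. (\<Sum>i\<in>UNIV. \<alpha> i) = 7" "\<forall>x. IYp \<Phi> k l x = hpoly_eval b B x"
    using hIY[of \<Phi> k l] unfolding is_hpoly_def by blast
  have "\<forall>x. hpoly_eval a A x = 0"
  proof (rule dens[OF A(1,2)], intro ballI)
    fix L x assume "L \<in> \<L>" "x \<in> L"
    then show "hpoly_eval a A x = 0" using onL A(3) by simp
  qed
  moreover have "\<forall>x. hpoly_eval b B x = 0"
  proof (rule dens[OF B(1,2)], intro ballI)
    fix L x assume "L \<in> \<L>" "x \<in> L"
    then show "hpoly_eval b B x = 0" using onL B(3) by simp
  qed
  ultimately show ?thesis using A(3) B(3) by simp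
qed

definition cv :: "real^'n \<Rightarrow> complex^'n" where
  "cv x = (\<chi> i. complex_of_real (x$i))"

lemma cv_A: "Apol \<Phi> (cv x) = cv (Apol \<Phi> x)"
  by (simp add: vec_eq_iff Apol_def cv_def)
lemma cv_B: "Bpol \<Phi> (cv x) = cv (Bpol \<Phi> x)"
  by (simp add: vec_eq_iff Bpol_def cv_def)
lemma cv_C: "Cpol \<Phi> (cv x) = cv (Cpol \<Phi> x)"
  by (simp add: vec_eq_iff Cpol_def cv_def)
lemma cv_bil: "bil (cv x) (cv y) = of_real (bil x y)"
  by (simp add: bil_def cv_def)
lemma cv_X: "Xpol \<Phi> (cv x) = cv (Xpol \<Phi> x)"
  unfolding Xpol_def cv_A cv_B cv_bil by (simp add: vec_eq_iff cv_def)
lemma cv_Y: "Ypol \<Phi> (cv x) = cv (Ypol \<Phi> x)"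
  unfolding Ypol_def cv_A cv_B cv_C cv_bil by (simp add: vec_eq_iff cv_def)
lemma cv_IX: "IXp \<Phi> k l (cv x) = of_real (IXp \<Phi> k l x)"
  unfolding IXp_def cv_X by (simp add: cv_def)
lemma cv_IY: "IYp \<Phi> k l (cv x) = of_real (IYp \<Phi> k l x)"
  unfolding IYp_def cv_Y by (simp add: cv_def)

lemma complexify:
  fixes F :: "complex^'n \<Rightarrow> complex"
  assumes "\<forall>x::real^'n. F (cv x) = 0" "PF F"
  shows "F z = 0"
proof -
  define x :: "real^'n" where "x = (\<chi> i. Re (z$i))"
  define y :: "real^'n" where "y = (\<chi> i. Im (z$i))"
  have ip: "ispoly (\<lambda>s. F (lineC (cv x) (cv y) s))" using assms(2) unfolding PF_def by blast
  have "lineC (cv x) (cv y) (of_real r) = cv (x + r *\<^sub>R y)" for r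
    by (simp add: vec_eq_iff lineC_def cv_def)
  then have "\<forall>r. F (lineC (cv x) (cv y) (of_real r)) = 0" using assms(1) by simp
  from ip_real_zero[OF ip this] have "F (lineC (cv x) (cv y) \<i>) = 0" .
  moreover have "lineC (cv x) (cv y) \<i> = z"
    by (simp add: vec_eq_iff lineC_def cv_def x_def y_def complex_eq_iff)
  ultimately show ?thesis by simp
qed

lemma PF_A: "PF (\<lambda>z::complex^'n. Apol \<Phi> z $ m)"
  unfolding Apol_def vec_lambda_beta by (intro PF_sum PF_mult PF_coord PF_const) simp_all
lemma PF_B: "PF (\<lambda>z::complex^'n. Bpol \<Phi> z $ m)"
  unfolding Bpol_def vec_lambda_beta by (intro PF_sum PF_mult PF_coord PF_const) simp_all
lemma PF_C: "PF (\<lambda>z::complex^'n. Cpol \<Phi> z $ m)"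
  unfolding Cpol_def vec_lambda_beta by (intro PF_sum PF_mult PF_coord PF_const) simp_all
lemma PF_bil:
  assumes "\<And>i. PF (\<lambda>z::complex^'n. F z $ i)" "\<And>i. PF (\<lambda>z::complex^'n. G z $ i)"
  shows "PF (\<lambda>z. bil (F z) (G z))"
  unfolding bil_def by (intro PF_sum PF_mult assms) simp_all
lemma PF_id: "PF (\<lambda>z::complex^'n. (\<lambda>z. z) z $ i)" by (rule PF_coord)
lemma PF_X: "PF (\<lambda>z::complex^'n. Xpol \<Phi> z $ l)"
  unfolding Xpol_def vec_lambda_beta
  by (intro PF_diff PF_mult PF_const PF_bil[OF PF_id PF_id, simplified] PF_bil[OF PF_id PF_A, simplified] PF_A PF_B)
lemma PF_Y: "PF (\<lambda>z::complex^'n. Ypol \<Phi> z $ l)"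
  unfolding Ypol_def vec_lambda_beta
  by (intro PF_diff PF_add PF_mult PF_const PF_bil[OF PF_id PF_id, simplified] PF_bil[OF PF_A PF_A]
      PF_bil[OF PF_id PF_B, simplified] PF_A PF_C)
lemma PF_IX: "PF (\<lambda>z::complex^'n. IXp \<Phi> k l z)"
  unfolding IXp_def by (intro PF_diff PF_mult PF_coord PF_X)
lemma PF_IY: "PF (\<lambda>z::complex^'n. IYp \<Phi> k l z)"
  unfolding IYp_def by (intro PF_diff PF_mult PF_coord PF_Y)

lemma par:
  fixes z Y :: "'a::comm_ring_1^'n"
  assumes "\<forall>k l. z$k * Y$l = z$l * Y$k"
  shows "bil z z * Y$m = bil Y z * z$m"
proof -
  have "bil Y z * z$m = (\<Sum>l\<in>UNIV. z$l * (z$m * Y$l))"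
    unfolding bil_def sum_distrib_right by (rule sum.cong) (auto simp: ac_simps)
  also have "\<dots> = (\<Sum>l\<in>UNIV. z$l * (z$l * Y$m))" using assms by simp
  also have "\<dots> = bil z z * Y$m" unfolding bil_def sum_distrib_right by (rule sum.cong) (auto simp: ac_simps)
  finally show ?thesis by simp
qed

lemma bil_comm: "bil x y = bil y (x::'a::comm_ring_1^'n)"
  unfolding bil_def by (simp add: mult.commute)

lemma bil_lin: "bil (\<chi> l. a * P$l - b * Q$l) (z::'a::comm_ring_1^'n) = a * bil z P - b * bil z Q"
proof -
  have "bil (\<chi> l. a * P$l - b * Q$l) z = (\<Sum>i\<in>UNIV. a * (z$i * P$i) - b * (z$i * Q$i))"
    unfolding bil_def by (rule sum.cong) (simp_all add: algebra_simps)
  then show ?thesis unfolding bil_def by (simp add: sum_subtractf sum_distrib_left)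
qed

lemma bil_scale: "bil (\<chi> l. c * P$l) Q = c * bil P (Q::'a::comm_ring_1^'n)"
  unfolding bil_def by (simp add: sum_distrib_left ac_simps)

lemma bil_A0: "Apol \<Phi> (0::'a::{real_algebra_1,comm_ring_1}^'n) = 0"
  by (simp add: vec_eq_iff Apol_def)

lemma cone_final:
  fixes \<Phi> :: "real^'n \<Rightarrow> real^'n" and v0 :: "complex^'n"
  assumes EX: "\<forall>z::complex^'n. \<forall>k l. z$k * Xpol \<Phi> z $ l = z$l * Xpol \<Phi> z $ k"
    and EY: "\<forall>z::complex^'n. \<forall>k l. z$k * Ypol \<Phi> z $ l = z$l * Ypol \<Phi> z $ k"
    and N0: "bil v0 v0 = 0"
  shows "bil (Apol \<Phi> v0) (Apol \<Phi> v0) = 0 \<and> bil v0 (Apol \<Phi> v0) = 0"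
proof (cases "v0 = 0")
  case True then show ?thesis by (simp add: bil_A0 bil_def)
next
  case False
  then obtain m0 where m0: "v0$m0 \<noteq> 0" by (auto simp: vec_eq_iff)
  define A where "A z = Apol \<Phi> z" for z :: "complex^'n"
  define B where "B z = Bpol \<Phi> z" for z :: "complex^'n"
  define f where "f z = bil z (A z)" for z
  define g where "g z = bil z (B z)" for z
  have Xf: "Xpol \<Phi> z = (\<chi> l. bil z z * B z $ l - (3 * f z) * A z $ l)" for z
    unfolding Xpol_def A_def B_def f_def by (simp add: mult.assoc)
  have bX: "bil (Xpol \<Phi> z) z = bil z z * g z - 3 * f z * f z" for z
    unfolding Xf bil_lin g_def f_def by (simp add: bil_comm[of z "A z"] mult.assoc)
  have PX: "bil z z * (bil z z * B z $ m - 3 * f z * A z $ m) = (bil z z * g z - 3 * f z * f z) * z$m" for z m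
    using par[OF spec[OF EX, of z], of m] bX[of z] Xf[of z] by simp
  have f0: "f v0 = 0"
  proof -
    have "(0 - 3 * f v0 * f v0) * v0$m0 = 0" using PX[of v0 m0] N0 by simp
    then show ?thesis using m0 by simp
  qed
  define w where "w = (\<chi> i. cnj (v0$i))"
  define L where "L s = lineC v0 w s" for s
  have L0: "L 0 = v0" by (simp add: L_def lineC_def vec_eq_iff)
  have bvw: "bil v0 w \<noteq> 0"
  proof -
    have "bil v0 w = (\<Sum>i\<in>UNIV. complex_of_real ((cmod (v0$i))\<^sup>2))"
      unfolding bil_def w_def vec_lambda_beta by (rule sum.cong) (simp_all only: complex_norm_square)
    then have eq: "bil v0 w = complex_of_real (\<Sum>i\<in>UNIV. (cmod (v0$i))\<^sup>2)" by simp
    have pos: "(\<Sum>i\<in>UNIV. (cmod (v0$i))\<^sup>2) > 0"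
      by (rule sum_pos2[of UNIV m0]) (use m0 in auto)
    show ?thesis unfolding eq of_real_eq_0_iff using pos by linarith
  qed
  define M where "M s = 2 * bil v0 w + s * bil w w" for s
  have M0: "M 0 \<noteq> 0" using bvw by (simp add: M_def)
  have ipM: "ispoly M" unfolding M_def by (intro ip_add ip_mult ip_const ip_id)
  have NL: "bil (L s) (L s) = s * M s" for s
  proof -
    have "bil (L s) (L s) = bil v0 v0 + s * (2 * bil v0 w) + s * s * bil w w"
      unfolding L_def lineC_def bil_def
      by (simp add: algebra_simps sum.distrib sum_distrib_left)
    then show ?thesis using N0 by (simp add: M_def algebra_simps)
  qed
  have PFf: "PF f" unfolding f_def A_def by (rule PF_bil[OF PF_id PF_A, simplified])
  have PFg: "PF g" unfolding g_def B_def by (rule PF_bil[OF PF_id PF_B, simplified])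
  have ipf: "ispoly (\<lambda>s. f (L s))" using PFf unfolding PF_def L_def by blast
  obtain h where h: "ispoly h" "\<forall>s. f (L s) = s * h s"
    using ip_factor[OF ipf] f0 L0 by auto
  have ipA: "ispoly (\<lambda>s. A (L s) $ m)" for m using PF_A unfolding PF_def L_def A_def by blast
  have ipB: "ispoly (\<lambda>s. B (L s) $ m)" for m using PF_B unfolding PF_def L_def B_def by blast
  have ipg: "ispoly (\<lambda>s. g (L s))" using PFg unfolding PF_def L_def by blast
  have ipL: "ispoly (\<lambda>s. L s $ m)" for m using PF_coord unfolding PF_def L_def by blast
  have g0: "g v0 = 0"
  proof -
    define \<psi> where "\<psi> s = M s * (s * M s * B (L s) $ m0 - 3 * s * h s * A (L s) $ m0)
        - (M s * g (L s) - 3 * s * h s * h s) * L s $ m0" for s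
    have ip\<psi>: "ispoly \<psi>" unfolding \<psi>_def
      by (intro ip_diff ip_mult ipM ip_id ipB ip_const h(1) ipA ipg ipL)
    have "\<psi> s = 0" if "s \<noteq> 0" for s
    proof -
      have eq: "s * M s * (s * M s * B (L s) $ m0 - 3 * (s * h s) * A (L s) $ m0)
          = (s * M s * g (L s) - 3 * (s * h s) * (s * h s)) * L s $ m0"
        using PX[of "L s" m0] NL[of s] h(2) by simp
      have "s * \<psi> s = s * M s * (s * M s * B (L s) $ m0 - 3 * (s * h s) * A (L s) $ m0)
          - (s * M s * g (L s) - 3 * (s * h s) * (s * h s)) * L s $ m0"
        unfolding \<psi>_def by (simp add: algebra_simps)
      then have "s * \<psi> s = 0" using eq by simp
      then show ?thesis using that by simp
    qed
    then have "\<psi> 0 = 0" using ip_zero_at0[OF ip\<psi>] by blast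
    then have "M 0 * g v0 * v0 $ m0 = 0" unfolding \<psi>_def using L0 by simp
    then show ?thesis using M0 m0 by simp
  qed
  define AA where "AA z = bil (A z) (A z)" for z
  have Yf: "Ypol \<Phi> z = (\<chi> l. bil z z * Cpol \<Phi> z $ l - (3 * AA z + 4 * g z) * A z $ l)" for z
    unfolding Ypol_def A_def B_def g_def AA_def by simp
  define Q where "Q s = bil (Ypol \<Phi> (L s)) (A (L s))" for s
  define R where "R s = bil (Ypol \<Phi> (L s)) (L s)" for s
  have PY: "bil z z * bil (Ypol \<Phi> z) (A z) = bil (Ypol \<Phi> z) z * f z" for z
  proof -
    have "bil z z * bil (Ypol \<Phi> z) (A z) = (\<Sum>m\<in>UNIV. (bil z z * Ypol \<Phi> z $ m) * A z $ m)"
      unfolding bil_def sum_distrib_left by (simp add: ac_simps)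
    also have "\<dots> = (\<Sum>m\<in>UNIV. (bil (Ypol \<Phi> z) z * z $ m) * A z $ m)"
      using par[OF spec[OF EY, of z]] by simp
    also have "\<dots> = bil (Ypol \<Phi> z) z * f z"
      unfolding f_def bil_def sum_distrib_left by (simp add: ac_simps)
    finally show ?thesis .
  qed
  have ipQ: "ispoly Q" unfolding Q_def A_def L_def
    using PF_bil[OF PF_Y PF_A] unfolding PF_def by blast
  have ipR: "ispoly R" unfolding R_def L_def
    using PF_bil[OF PF_Y PF_id, simplified] unfolding PF_def by blast
  have QR: "M 0 * Q 0 = R 0 * h 0"
  proof -
    define \<chi>' where "\<chi>' s = M s * Q s - R s * h s" for s
    have ip\<chi>: "ispoly \<chi>'" unfolding \<chi>'_def by (intro ip_diff ip_mult ipM ipQ ipR h(1))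
    have "\<chi>' s = 0" if "s \<noteq> 0" for s
    proof -
      have "s * M s * Q s = R s * (s * h s)"
        using PY[of "L s"] NL[of s] h(2) unfolding Q_def R_def by simp
      then have "s * \<chi>' s = 0" unfolding \<chi>'_def by (simp add: algebra_simps)
      then show ?thesis using that by simp
    qed
    then have "\<chi>' 0 = 0" using ip_zero_at0[OF ip\<chi>] by blast
    then show ?thesis unfolding \<chi>'_def by simp
  qed
  have Yv0: "Ypol \<Phi> v0 = (\<chi> l. (- 3 * AA v0) * A v0 $ l)"
    unfolding Yf using N0 g0 by simp
  have Q0: "Q 0 = - 3 * AA v0 * AA v0" unfolding Q_def L0 Yv0 bil_scale AA_def by simp
  have R0: "R 0 = 0" unfolding R_def L0 Yv0 bil_scale using f0 unfolding f_def
    by (simp add: bil_comm[of "A v0" v0])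
  have "AA v0 = 0" using QR Q0 R0 M0 by simp
  then show ?thesis using f0 unfolding AA_def f_def A_def by simp
qed

lemma quad_A: "quad_part_C \<Phi> z $ k = Apol \<Phi> z $ k / 2"
  unfolding quad_part_C_def quad_coeff_def Apol_def d2_def dd_def
  by (simp add: sum_divide_distrib ac_simps)

lemma cbil_bil: "cbil x y = bil x y"
  unfolding cbil_def bil_def ..

theorem proposition1:
  fixes \<L> :: "(real^'n) set set" and \<Phi> :: "real^'n \<Rightarrow> real^'n" and U :: "(real^'n) set"
  assumes "zariski_dense_lines \<L>"
    and "smooth_diffeo_germ_id \<Phi> U"
    and "\<forall>L\<in>\<L>. \<exists>\<epsilon>>0. L \<inter> ball 0 \<epsilon> \<subseteq> U \<and> (\<exists>S. is_circle S \<and> \<Phi> ` (L \<inter> ball 0 \<epsilon>) \<subseteq> S)"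
  shows "\<forall>z::complex^'n. cbil z z = 0 \<longrightarrow>
           cbil (quad_part_C \<Phi> z) (quad_part_C \<Phi> z) = 0 \<and> cbil (quad_part_C \<Phi> z) z = 0"
proof (intro allI impI)
  fix z :: "complex^'n"
  assume z: "cbil z z = 0"
  have R: "IXp \<Phi> k l (x::real^'n) = (0::real) \<and> IYp \<Phi> k l x = (0::real)" for k l x
    by (rule real_ids[OF assms])
  have CX: "IXp \<Phi> k l (y::complex^'n) = 0" for k l y
    by (rule complexify[OF _ PF_IX]) (simp add: cv_IX R)
  have CY: "IYp \<Phi> k l (y::complex^'n) = 0" for k l y
    by (rule complexify[OF _ PF_IY]) (simp add: cv_IY R)
  have EX: "\<forall>y::complex^'n. \<forall>k l. y$k * Xpol \<Phi> y $ l = y$l * Xpol \<Phi> y $ k"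
    using CX unfolding IXp_def by simp
  have EY: "\<forall>y::complex^'n. \<forall>k l. y$k * Ypol \<Phi> y $ l = y$l * Ypol \<Phi> y $ k"
    using CY unfolding IYp_def by simp
  have F: "bil (Apol \<Phi> z) (Apol \<Phi> z) = 0 \<and> bil z (Apol \<Phi> z) = 0"
    by (rule cone_final[OF EX EY]) (use z in \<open>simp add: cbil_bil\<close>)
  have q1: "cbil (quad_part_C \<Phi> z) (quad_part_C \<Phi> z) = bil (Apol \<Phi> z) (Apol \<Phi> z) / 4"
    unfolding cbil_def bil_def quad_A by (simp add: sum_divide_distrib)
  have q2: "cbil (quad_part_C \<Phi> z) z = bil z (Apol \<Phi> z) / 2"
    unfolding cbil_def bil_def quad_A by (simp add: sum_divide_distrib mult.commute)
  show "cbil (quad_part_C \<Phi> z) (quad_part_C \<Phi> z) = 0 \<and> cbil (quad_part_C \<Phi> z) z = 0"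
    using F q1 q2 by simp
qed


end
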